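(* Let $(X,\mathcal{B},\mu,f)$ be a measure preserving system and $\{E_{\rho_n}\}_{n\ge1}$ a sequence of measurable subsets of $X$; put $E^k_{\rho_n}=f^{-k}E_{\rho_n}$. Fix $r\in\mathbb{Z}_+$ and let $H_r=\bigcap_{m\ge1}\bigcup_{n\ge m}\{x:\#\{1\le k\le n:x\in E^k_{\rho_n}\}\ge r\}$. If $E_{\rho_{n_1}}\subset E_{\rho_{n_2}}$ whenever $n_1\ge n_2$, and $\lim_{n\to\infty}\mu(E_{\rho_n})=0$, then $\mu(H_r\,\Delta\, f^{-1}H_r)=0$. *)

theory Defs
  imports "HOL-Probability.Probability"
begin

definition mps :: "'a measure \<Rightarrow> ('a \<Rightarrow> 'a) \<Rightarrow> bool" where
  "mps M f \<longleftrightarrow> prob_space M \<and> f \<in> M \<rightarrow>\<^sub>M M \<and>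
     (\<forall>A \<in> sets M. emeasure M (f -` A \<inter> space M) = emeasure M A)"

definition hit_set :: "'a measure \<Rightarrow> ('a \<Rightarrow> 'a) \<Rightarrow> (nat \<Rightarrow> 'a set) \<Rightarrow> nat \<Rightarrow> nat \<Rightarrow> 'a set" where
  "hit_set M f E n k = (f ^^ k) -` (E n) \<inter> space M"

definition H_set :: "'a measure \<Rightarrow> ('a \<Rightarrow> 'a) \<Rightarrow> (nat \<Rightarrow> 'a set) \<Rightarrow> nat \<Rightarrow> 'a set" where
  "H_set M f E r = (\<Inter>m\<in>{1..}. \<Union>n\<in>{m..}.
      {x \<in> space M. card {k \<in> {1..n}. x \<in> hit_set M f E n k} \<ge> r})"

end

theory Submission
  imports Defs
begin

lemma count_set_meas:
  fixes M :: "'a measure" and n :: nat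
  assumes A: "\<And>k. k \<in> {1..n} \<Longrightarrow> A k \<in> sets M" and r: "r \<ge> (1::nat)"
  shows "{x \<in> space M. r \<le> card {k \<in> {1..n}. x \<in> A k}} \<in> sets M"
proof -
  have eq: "{x \<in> space M. r \<le> card {k \<in> {1..n}. x \<in> A k}}
     = (\<Union>S\<in>{S. S \<subseteq> {1..n} \<and> card S = r}. \<Inter>k\<in>S. A k \<inter> space M)"
  proof (intro equalityI subsetI)
    fix x assume "x \<in> {x \<in> space M. r \<le> card {k \<in> {1..n}. x \<in> A k}}"
    then have x: "x \<in> space M" "r \<le> card {k \<in> {1..n}. x \<in> A k}" by auto
    obtain T where T: "T \<subseteq> {k \<in> {1..n}. x \<in> A k}" "card T = r" "finite T"
      using obtain_subset_with_card_n[OF x(2)] by metis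
    show "x \<in> (\<Union>S\<in>{S. S \<subseteq> {1..n} \<and> card S = r}. \<Inter>k\<in>S. A k \<inter> space M)"
      using T x by (intro UN_I[of T]) auto
  next
    fix x assume "x \<in> (\<Union>S\<in>{S. S \<subseteq> {1..n} \<and> card S = r}. \<Inter>k\<in>S. A k \<inter> space M)"
    then obtain S where S: "S \<subseteq> {1..n}" "card S = r" "\<forall>k\<in>S. x \<in> A k \<inter> space M" by blast
    then have "S \<noteq> {}" using r by auto
    then have "x \<in> space M" using S by auto
    moreover have "card S \<le> card {k \<in> {1..n}. x \<in> A k}"
      using S by (intro card_mono) (auto intro: finite_subset[of _ "{1..n}"])
    ultimately show "x \<in> {x \<in> space M. r \<le> card {k \<in> {1..n}. x \<in> A k}}" using S by auto
  qed
  have "(\<Union>S\<in>{S. S \<subseteq> {1..n} \<and> card S = r}. \<Inter>k\<in>S. A k \<inter> space M) \<in> sets M"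
  proof (rule sets.finite_UN)
    show "finite {S. S \<subseteq> {1..n} \<and> card S = r}" by (rule finite_subset[of _ "Pow {1..n}"]) auto
    fix S assume S: "S \<in> {S. S \<subseteq> {1..n} \<and> card S = r}"
    then have "S \<noteq> {}" "finite S" using r finite_subset by fastforce+
    then show "(\<Inter>k\<in>S. A k \<inter> space M) \<in> sets M"
      using S A by (intro sets.finite_INT) auto
  qed
  then show ?thesis using eq by simp
qed

theorem proposition2p10:
  fixes M :: "'a measure" and f :: "'a \<Rightarrow> 'a" and E :: "nat \<Rightarrow> 'a set" and r :: nat
  assumes "mps M f"
    and "\<And>n. n \<ge> 1 \<Longrightarrow> E n \<in> sets M"
    and "r \<ge> 1"
    and "\<And>n1 n2. 1 \<le> n2 \<Longrightarrow> n2 \<le> n1 \<Longrightarrow> E n1 \<subseteq> E n2"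
    and "(\<lambda>n. measure M (E n)) \<longlonglongrightarrow> 0"
  shows "measure M ((H_set M f E r - (f -` H_set M f E r \<inter> space M))
            \<union> ((f -` H_set M f E r \<inter> space M) - H_set M f E r)) = 0"
proof -
  interpret prob_space M using assms(1) unfolding mps_def by auto
  have fm: "f \<in> M \<rightarrow>\<^sub>M M" using assms(1) unfolding mps_def by auto
  have pres: "\<And>A. A \<in> sets M \<Longrightarrow> emeasure M (f -` A \<inter> space M) = emeasure M A"
    using assms(1) unfolding mps_def by auto
  have presm: "\<And>A. A \<in> sets M \<Longrightarrow> measure M (f -` A \<inter> space M) = measure M A"
    using pres by (simp add: measure_def)
  define H where "H = H_set M f E r"
  define C where "C = (\<lambda>n x. card {k \<in> {1..n}. x \<in> hit_set M f E n k})"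
  have Hd: "H = (\<Inter>m\<in>{1..}. \<Union>n\<in>{m..}. {x \<in> space M. C n x \<ge> r})"
    unfolding H_def H_set_def C_def by simp
  have hitm: "hit_set M f E n k \<in> sets M" if "n \<ge> 1" for n k
    unfolding hit_set_def using measurable_sets[OF measurable_compose_n[OF fm] assms(2)[OF that]] .
  have Sm: "{x \<in> space M. C n x \<ge> r} \<in> sets M" if "n \<ge> 1" for n
    unfolding C_def using count_set_meas[OF hitm[OF that] assms(3)] .
  have Hm: "H \<in> sets M" unfolding Hd
    using Sm by (intro sets.countable_INT' sets.countable_UN') auto
  have Hsp: "H \<subseteq> space M" unfolding Hd by auto
  define N where "N = (\<Inter>n\<in>{1..}. E n)"
  have Nm: "N \<in> sets M" unfolding N_def using assms(2) by (intro sets.countable_INT') auto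
  have N0: "measure M N = 0"
  proof -
    have "measure M N \<le> measure M (E n)" if "n \<ge> 1" for n
      unfolding N_def using that assms(2)[OF that] by (intro finite_measure_mono) auto
    then have "eventually (\<lambda>n. measure M N \<le> measure M (E n)) sequentially"
      unfolding eventually_sequentially by blast
    then have "measure M N \<le> 0" using assms(5) by (intro tendsto_lowerbound) auto
    then show ?thesis by (simp add: measure_nonneg antisym)
  qed
  define N1 where "N1 = f -` N \<inter> space M"
  have N1m: "N1 \<in> sets M" unfolding N1_def using fm Nm by (rule measurable_sets)
  have N10: "measure M N1 = 0" unfolding N1_def using presm[OF Nm] N0 by simp
  have sub: "H - (f -` H \<inter> space M) \<subseteq> N1"
  proof
    fix x assume x: "x \<in> H - (f -` H \<inter> space M)"
    then have xs: "x \<in> space M" "x \<in> H" "f x \<notin> H" using Hsp by auto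
    have fxs: "f x \<in> space M" using fm xs by (auto simp: measurable_def)
    show "x \<in> N1"
    proof (rule ccontr)
      assume "x \<notin> N1"
      then obtain n0 where n0: "n0 \<ge> 1" "f x \<notin> E n0" using xs unfolding N1_def N_def by auto
      obtain m0 where m0: "m0 \<ge> 1" "\<And>n. n \<ge> m0 \<Longrightarrow> C n (f x) < r"
        using xs(3) fxs unfolding Hd by (auto simp: not_le)
      obtain n where n: "n \<ge> max n0 m0" "C n x \<ge> r"
      proof -
        have "max n0 m0 \<in> {1..}" using m0(1) by auto
        then have "x \<in> (\<Union>n\<in>{max n0 m0..}. {x \<in> space M. C n x \<ge> r})"
          using xs(2) unfolding Hd by blast
        then show ?thesis using that by auto
      qed
      have nE: "f x \<notin> E n" using assms(4)[of n0 n] n n0 by auto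
      have "{k \<in> {1..n}. x \<in> hit_set M f E n k} \<subseteq> Suc ` {k \<in> {1..n}. f x \<in> hit_set M f E n k}"
      proof
        fix k assume k: "k \<in> {k \<in> {1..n}. x \<in> hit_set M f E n k}"
        then obtain j where j: "k = Suc j" by (cases k) auto
        have "(f ^^ k) x = (f ^^ j) (f x)" unfolding j by (metis comp_apply funpow_Suc_right)
        then have "j \<noteq> 0" using k nE by (cases "j = 0") (auto simp: hit_set_def)
        then show "k \<in> Suc ` {k \<in> {1..n}. f x \<in> hit_set M f E n k}"
          using k j fxs \<open>(f ^^ k) x = (f ^^ j) (f x)\<close> by (auto simp: hit_set_def)
      qed
      then have "C n x \<le> card (Suc ` {k \<in> {1..n}. f x \<in> hit_set M f E n k})"
        unfolding C_def by (intro card_mono) auto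
      also have "\<dots> \<le> C n (f x)" unfolding C_def by (rule card_image_le) auto
      finally show False using m0(2)[of n] n by auto
    qed
  qed
  have fHm: "f -` H \<inter> space M \<in> sets M" using fm Hm by (rule measurable_sets)
  have A0: "measure M (H - (f -` H \<inter> space M)) = 0"
    using finite_measure_mono[OF sub N1m] N10 measure_nonneg[of M] by (simp add: antisym)
  have B0: "measure M ((f -` H \<inter> space M) - H) = 0"
    using A0 finite_measure_Diff'[OF Hm fHm] finite_measure_Diff'[OF fHm Hm] presm[OF Hm]
    by (simp add: Int_commute)
  have "measure M ((H - (f -` H \<inter> space M)) \<union> ((f -` H \<inter> space M) - H))
      \<le> measure M (H - (f -` H \<inter> space M)) + measure M ((f -` H \<inter> space M) - H)"
    using Hm fHm by (intro measure_subadditive) (auto simp: emeasure_eq_measure)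
  then show ?thesis using A0 B0 measure_nonneg[of M] unfolding H_def
    by (metis add.right_neutral antisym)
qed

end
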